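(* Let $(\mathcal{F}_t)$ be a filtration. Let $\varepsilon_t = \sigma_t z_t$ with $\sigma_t = \exp(H_t)$, $H_t = \bar{H}_t + h_t$, where $\bar{H}_t = E\{H_t\mid\mathcal{F}_{t-1}\}$ is $\mathcal{F}_{t-1}$-measurable, $(h_t)$ is i.i.d. with Laplace density $\frac{1}{2\Delta}\exp(-|x|/\Delta)$, $\Delta = E|h_t|>0$, and $(z_t)$ is i.i.d. $\mathcal{N}(0,1)$, with $z_t$, $h_t$ mutually independent and independent of $\mathcal{F}_{t-1}$. For $\Lambda > 0$ put $\widetilde{\Lambda}_t = \Lambda/(\sqrt{2}e^{\bar{H}_t})$. Then, as $\widetilde{\Lambda}_t \to \infty$, $$P\{|\varepsilon_t| \ge \Lambda \mid \mathcal{F}_{t-1}\} = \frac{1}{2\sqrt{\pi}}\,\Gamma\!\left(\frac{1+1/\Delta}{2}\right)\widetilde{\Lambda}_t^{-1/\Delta} + O\!\left(\widetilde{\Lambda}_t^{-5}e^{-\widetilde{\Lambda}_t^2}\right).$$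
   Context: $\Gamma(\cdot)$ denotes the gamma function. *)

theory Defs
  imports "HOL-Probability.Probability"
begin

definition laplace_density :: "real \<Rightarrow> real \<Rightarrow> real" where
  "laplace_density D x = exp (- \<bar>x\<bar> / D) / (2 * D)"

end

theory Submission
  imports Defs
begin


lemma gamma_half_line:
  fixes p :: real assumes p: "p > 0"
  shows "integrable lborel (\<lambda>v. indicator {0<..} v * (v powr p * exp (- v\<^sup>2 / 2)))
         \<and> (\<integral>v. indicator {0<..} v * (v powr p * exp (- v\<^sup>2 / 2)) \<partial>lborel) = 2 powr ((p - 1) / 2) * Gamma ((p + 1) / 2)"
proof -
  define s where "s = (p + 1) / 2"
  have s: "s > 0" using p by (simp add: s_def)
  define f where "f = (\<lambda>t::real. t powr (s - 1) / exp t)"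
  have G0: "(f has_integral Gamma s) {0..}" unfolding f_def by (rule Gamma_integral_real[OF s])
  have G: "(f has_integral Gamma s) {0<..}"
  proof (rule iffD1[OF has_integral_spike_set_eq G0])
    show "negligible {x \<in> {0..} - {0<..}. f x \<noteq> 0}"
      by (rule negligible_subset[of "{0}"]) auto
    show "negligible {x \<in> {0<..} - {0..}. f x \<noteq> 0}"
      by (rule negligible_subset[of "{}"]) auto
  qed
  have AI: "f absolutely_integrable_on {0<..}"
    using G by (intro nonnegative_absolutely_integrable_1) (auto simp: f_def)
  have img: "(\<lambda>v::real. v\<^sup>2 / 2) ` {0<..} = {0<..}"
  proof (intro equalityI subsetI)
    fix t :: real assume "t \<in> {0<..}"
    then have "t = (sqrt (2*t))\<^sup>2 / 2" "sqrt (2*t) \<in> {0<..}" by auto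
    then show "t \<in> (\<lambda>v::real. v\<^sup>2 / 2) ` {0<..}" by blast
  qed auto
  have inj: "inj_on (\<lambda>v::real. v\<^sup>2 / 2) {0<..}"
    by (auto simp: inj_on_def power2_eq_iff_nonneg)
  have "(\<lambda>x. \<bar>x\<bar> * f (x\<^sup>2 / 2)) absolutely_integrable_on {0<..} \<and>
        integral {0<..} (\<lambda>x. \<bar>x\<bar> * f (x\<^sup>2 / 2)) = Gamma s"
    by (subst has_absolute_integral_change_of_variables_1'[where g' = "\<lambda>x. x"])
       (auto intro!: derivative_eq_intros simp: img inj AI integral_unique[OF G])
  then have A1: "set_integrable lebesgue {0<..} (\<lambda>x. \<bar>x\<bar> * f (x\<^sup>2 / 2))"
     and A2: "set_lebesgue_integral lebesgue {0<..} (\<lambda>x. \<bar>x\<bar> * f (x\<^sup>2 / 2)) = Gamma s"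
    using set_lebesgue_integral_eq_integral(2) by metis+
  have eq: "\<bar>x\<bar> * f (x\<^sup>2 / 2) = 2 powr ((1 - p) / 2) * (x powr p * exp (- x\<^sup>2 / 2))" if x: "x > 0" for x
  proof -
    have l: "ln (x\<^sup>2/2) = 2 * ln x - ln 2" using x by (simp add: ln_div ln_realpow)
    have "x * (x\<^sup>2/2) powr (s-1) = exp (ln x + (s-1) * ln (x\<^sup>2/2))"
      using x by (simp add: powr_def exp_add)
    also have "ln x + (s-1) * ln (x\<^sup>2/2) = (1-p)/2 * ln 2 + p * ln x"
      unfolding l s_def by (simp add: field_simps)
    also have "exp ((1-p)/2 * ln 2 + p * ln x) = 2 powr ((1 - p) / 2) * x powr p"
      using x by (simp add: powr_def exp_add)
    finally show ?thesis using x by (simp add: f_def exp_minus field_simps)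
  qed
  have eq2: "x * f (x\<^sup>2 / 2) = 2 powr ((1 - p) / 2) * (x powr p * exp (- (x\<^sup>2 / 2)))" if "x > 0" for x
    using eq[OF that] that by simp
  define g where "g = (\<lambda>x::real. x powr p * exp (- x\<^sup>2 / 2))"
  have gm: "g \<in> borel_measurable borel" unfolding g_def by measurable
  have "integrable lebesgue (\<lambda>x. indicator {0<..} x * (2 powr ((1 - p) / 2) * g x))"
    using A1 unfolding set_integrable_def
    by (rule iffD1[OF Bochner_Integration.integrable_cong[OF refl], rotated]) (auto simp: eq eq2 g_def indicator_def)
  then have I1: "integrable lebesgue (\<lambda>x. indicator {0<..} x * g x)"
    by (simp add: mult.left_commute[of "indicator _ _"])
  have I2: "(\<integral>x. indicator {0<..} x * (2 powr ((1 - p) / 2) * g x) \<partial>lebesgue) = Gamma s"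
    using A2 unfolding set_lebesgue_integral_def
    by (subst Bochner_Integration.integral_cong[OF refl, where g="\<lambda>x. indicator {0<..} x *\<^sub>R (\<bar>x\<bar> * f (x\<^sup>2 / 2))"])
       (auto simp: eq eq2 g_def indicator_def)
  then have I3: "(\<integral>x. indicator {0<..} x * g x \<partial>lebesgue) = 2 powr ((p - 1) / 2) * Gamma s"
  proof -
    define c where "c = 2 powr ((1 - p) / 2)"
    have c: "c > 0" by (simp add: c_def)
    define J where "J = (\<integral>x. indicator {0<..} x * g x \<partial>lebesgue)"
    have h1: "c * J = Gamma s" unfolding J_def
      using I2 by (simp add: mult.left_commute[of "indicator _ _"] c_def)
    have h2: "2 powr ((p - 1) / 2) = 1 / c"
    proof -
      have e: "(p - 1) / 2 = - ((1 - p) / 2)" by (simp add: field_simps)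
      show ?thesis unfolding c_def by (simp only: e powr_minus_divide)
    qed
    have "J = (1/c) * (c * J)" using c by simp
    then show ?thesis using h1 h2 unfolding J_def by simp
  qed
  show ?thesis using I1 I3 integrable_completion[of "\<lambda>x. indicator {0<..} x * g x" lborel]
      integral_completion[of "\<lambda>x. indicator {0<..} x * g x" lborel] gm
    by (simp add: g_def s_def)
qed


lemma abs_moment:
  fixes p :: real assumes p: "p > 0"
  shows "integrable lborel (\<lambda>v. std_normal_density v * \<bar>v\<bar> powr p)
         \<and> (\<integral>v. std_normal_density v * \<bar>v\<bar> powr p \<partial>lborel) = 2 powr (p / 2) * Gamma ((p + 1) / 2) / sqrt pi"
proof -
  define G where "G = (\<lambda>v::real. indicator {0<..} v * (v powr p * exp (- v\<^sup>2 / 2)))"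
  have IG: "integrable lborel G" and JG: "(\<integral>v. G v \<partial>lborel) = 2 powr ((p - 1) / 2) * Gamma ((p + 1) / 2)"
    using gamma_half_line[OF p] unfolding G_def by auto
  have IG': "integrable lborel (\<lambda>v. G (0 + (-1) * v))"
    by (rule lborel_integrable_real_affine[OF IG]) simp
  have JG': "(\<integral>v. G (0 + (-1) * v) \<partial>lborel) = (\<integral>v. G v \<partial>lborel)"
    using lborel_integral_real_affine[of "-1" G 0] by simp
  have eq: "std_normal_density v * \<bar>v\<bar> powr p = (G v + G (0 + (-1) * v)) / sqrt (2 * pi)" for v
    using p by (cases v "0::real" rule: linorder_cases)
      (auto simp: G_def std_normal_density_def indicator_def)
  have I: "integrable lborel (\<lambda>v. std_normal_density v * \<bar>v\<bar> powr p)"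
    unfolding eq using IG IG' by auto
  have "(\<integral>v. std_normal_density v * \<bar>v\<bar> powr p \<partial>lborel) = 2 * (\<integral>v. G v \<partial>lborel) / sqrt (2 * pi)"
    unfolding eq using IG IG' JG' by simp
  also have "\<dots> = 2 powr (p / 2) * Gamma ((p + 1) / 2) / sqrt pi"
  proof -
    have "2 * 2 powr ((p - 1) / 2) = 2 powr (p / 2) * sqrt 2"
    proof -
      have "2 * 2 powr ((p - 1) / 2) = 2 powr (1 + (p - 1) / 2)" by (simp add: powr_add)
      also have "1 + (p - 1) / 2 = p / 2 + 1 / 2" by (simp add: field_simps)
      also have "2 powr (p / 2 + 1 / 2) = 2 powr (p / 2) * sqrt 2" by (simp add: powr_add powr_half_sqrt)
      finally show ?thesis .
    qed
    then show ?thesis unfolding JG by (simp add: real_sqrt_mult field_simps)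
  qed
  finally show ?thesis using I by simp
qed

lemma laplace_tail:
  fixes D a :: real assumes D: "D > 0"
  shows "(\<integral>\<^sup>+u. ennreal (laplace_density D u) * indicator {a..} u \<partial>lborel)
         = ennreal (if 0 \<le> a then exp (- a / D) / 2 else 1 - exp (a / D) / 2)"
proof -
  have meas[measurable]: "laplace_density D \<in> borel_measurable borel" unfolding laplace_density_def by measurable
  have pos: "(\<integral>\<^sup>+u. ennreal (laplace_density D u) * indicator {b..} u \<partial>lborel) = ennreal (exp (- b / D) / 2)"
    if b: "0 \<le> b" for b
  proof -
    have "(\<integral>\<^sup>+u. ennreal (laplace_density D u) * indicator {b..} u \<partial>lborel) = ennreal (0 - (- exp (- b / D) / 2))"
    proof (rule nn_integral_FTC_atLeast[OF meas])
      fix x assume "b \<le> x"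
      then have "x \<ge> 0" using b by simp
      then show "((\<lambda>u. - exp (- u / D) / 2) has_real_derivative laplace_density D x) (at x)"
        using D by (auto intro!: derivative_eq_intros simp: laplace_density_def field_simps)
    next
      fix x show "0 \<le> laplace_density D x" using D by (simp add: laplace_density_def)
    next
      show "((\<lambda>u. - exp (- u / D) / 2) \<longlongrightarrow> 0) at_top"
        using D by real_asymp
    qed
    then show ?thesis by simp
  qed
  show ?thesis
  proof (cases "0 \<le> a")
    case True then show ?thesis using pos by simp
  next
    case False
    have "(\<integral>\<^sup>+u. ennreal (laplace_density D u) * indicator {a..} u \<partial>lborel) =
          (\<integral>\<^sup>+u. ennreal (laplace_density D u) * indicator {a..0} u + ennreal (laplace_density D u) * indicator {0..} u \<partial>lborel)"
    proof (rule nn_integral_cong_AE)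
      show "AE u in lborel. ennreal (laplace_density D u) * indicator {a..} u =
          ennreal (laplace_density D u) * indicator {a..0} u + ennreal (laplace_density D u) * indicator {0..} u"
        using AE_lborel_singleton[of 0] by eventually_elim (use False in \<open>auto simp: indicator_def\<close>)
    qed
    also have "\<dots> = (\<integral>\<^sup>+u. ennreal (laplace_density D u) * indicator {a..0} u \<partial>lborel) + ennreal (exp (- 0 / D) / 2)"
    proof -
      have m1: "(\<lambda>u. ennreal (laplace_density D u) * indicator {a..0} u) \<in> borel_measurable lborel" by measurable
      have m2: "(\<lambda>u. ennreal (laplace_density D u) * indicator {0..} u) \<in> borel_measurable lborel" by measurable
      show ?thesis using nn_integral_add[OF m1 m2] pos[of 0] by simp
    qed
    also have "(\<integral>\<^sup>+u. ennreal (laplace_density D u) * indicator {a..0} u \<partial>lborel) = ennreal (exp (0 / D) / 2 - exp (a / D) / 2)"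
    proof -
      have "(\<integral>\<^sup>+u\<in>{a..0}. ennreal (laplace_density D u) \<partial>lborel) = ennreal (exp (0 / D) / 2 - exp (a / D) / 2)"
      proof (rule nn_integral_FTC_Icc[OF meas])
        fix x assume "x \<in> {a..0}"
        then have "x \<le> 0" by simp
        then show "((\<lambda>u. exp (u / D) / 2) has_real_derivative laplace_density D x) (at x)"
          using D by (auto intro!: derivative_eq_intros simp: laplace_density_def field_simps)
      next
        fix x show "0 \<le> laplace_density D x" using D by (simp add: laplace_density_def)
      qed (use False in auto)
      then show ?thesis by (simp add: mult.commute)
    qed
    also have "ennreal (exp (0 / D) / 2 - exp (a / D) / 2) + ennreal (exp (- 0 / D) / 2) = ennreal (1 - exp (a / D) / 2)"
    proof -
      have "exp (a / D) \<le> 1" using False D by (simp add: divide_nonpos_pos)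
      then show ?thesis by (subst ennreal_plus[symmetric]) auto
    qed
    finally show ?thesis using False by simp
  qed
qed



definition Tf :: "real \<Rightarrow> real \<Rightarrow> real \<Rightarrow> real" where
  "Tf p L v = (if \<bar>v\<bar> \<le> L then (\<bar>v\<bar> / L) powr p / 2 else 1 - (L / \<bar>v\<bar>) powr p / 2)"

lemma Tf_bounds: "p > 0 \<Longrightarrow> L > 0 \<Longrightarrow> 0 \<le> Tf p L v \<and> Tf p L v \<le> 1"
proof -
  assume p: "p > 0" and L: "L > 0"
  show ?thesis
  proof (cases "\<bar>v\<bar> \<le> L")
    case True
    have "(\<bar>v\<bar> / L) powr p \<le> 1" using powr_mono2[of p "\<bar>v\<bar> / L" 1] True L p by simp
    then show ?thesis using True by (simp add: Tf_def)
  next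
    case False
    have "(L / \<bar>v\<bar>) powr p \<le> 1" using powr_mono2[of p "L / \<bar>v\<bar>" 1] False L p by simp
    then show ?thesis using False by (simp add: Tf_def)
  qed
qed

lemma section_measure:
  fixes D L v :: real assumes D: "D > 0" and L: "L > 0"
  shows "(\<integral>\<^sup>+u. ennreal (laplace_density D u) * indicator {u. L \<le> exp u * \<bar>v\<bar>} u \<partial>lborel)
         = ennreal (Tf (1 / D) L v)"
proof (cases "v = 0")
  case True
  then show ?thesis using L by (simp add: Tf_def)
next
  case False
  define a where "a = ln (L / \<bar>v\<bar>)"
  have set: "{u. L \<le> exp u * \<bar>v\<bar>} = {a..}"
  proof -
    have "L \<le> exp u * \<bar>v\<bar> \<longleftrightarrow> a \<le> u" for u
    proof -
      have "L \<le> exp u * \<bar>v\<bar> \<longleftrightarrow> L / \<bar>v\<bar> \<le> exp u" using False by (simp add: field_simps)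
      also have "\<dots> \<longleftrightarrow> ln (L / \<bar>v\<bar>) \<le> u" using False L by (subst ln_le_cancel_iff[symmetric]) auto
      finally show ?thesis by (simp add: a_def)
    qed
    then show ?thesis by auto
  qed
  have a0: "0 \<le> a \<longleftrightarrow> \<bar>v\<bar> \<le> L" using False L by (simp add: a_def)
  have e1: "exp (- a / D) = (\<bar>v\<bar> / L) powr (1 / D)"
    using False L by (simp add: a_def powr_def ln_div)
  have e2: "exp (a / D) = (L / \<bar>v\<bar>) powr (1 / D)"
    using False L by (simp add: a_def powr_def ln_div)
  show ?thesis unfolding set laplace_tail[OF D] using a0 e1 e2 by (simp add: Tf_def)
qed

lemma k_bound:
  fixes p u :: real assumes p: "p > 0" and u: "u > 1"
  shows "0 \<le> (u powr p + (1 / u) powr p) / 2 - 1 \<and>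
         (u powr p + (1 / u) powr p) / 2 - 1 \<le> p\<^sup>2 / 2 * (u - 1)\<^sup>2 * u powr p"
proof -
  define x where "x = u powr p"
  have x0: "x > 0" using u by (simp add: x_def)
  have inv: "(1 / u) powr p = 1 / x" using u by (simp add: x_def powr_divide)
  have k: "(u powr p + (1 / u) powr p) / 2 - 1 = (x - 1)\<^sup>2 / (2 * x)"
    unfolding inv x_def[symmetric] using x0 by (simp add: field_simps power2_eq_square)
  define y where "y = p * ln u"
  have y0: "y \<ge> 0" using p u by (simp add: y_def)
  have xy: "x = exp y" using u by (simp add: x_def y_def powr_def)
  have x1: "x \<ge> 1" using y0 xy by simp
  have "exp y - 1 \<le> y * exp y"
  proof -
    have "1 + (- y) \<le> exp (- y)" by (rule exp_ge_add_one_self)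
    then have "(1 - y) * exp y \<le> exp (- y) * exp y" by (intro mult_right_mono) auto
    then show ?thesis by (simp add: exp_minus field_simps)
  qed
  moreover have "y \<le> p * (u - 1)" unfolding y_def using p u ln_le_minus_one[of u] by (intro mult_left_mono) auto
  ultimately have "x - 1 \<le> p * (u - 1) * x" using xy x0 by (smt (verit) mult_right_mono)
  then have "(x - 1)\<^sup>2 \<le> (p * (u - 1) * x)\<^sup>2" using x1 by (intro power_mono) auto
  then have "(x - 1)\<^sup>2 / (2 * x) \<le> (p * (u - 1) * x)\<^sup>2 / (2 * x)" using x0 by (intro divide_right_mono) auto
  also have "(p * (u - 1) * x)\<^sup>2 / (2 * x) = p\<^sup>2 / 2 * (u - 1)\<^sup>2 * x" using x0 by (simp add: power2_eq_square field_simps)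
  finally show ?thesis unfolding k x_def using x0 x_def by auto
qed

lemma exp_moment2:
  fixes l :: real assumes l: "l > 0"
  shows "(\<integral>\<^sup>+t. ennreal (indicator {0..} t * (t\<^sup>2 * exp (- l * t))) \<partial>lborel) = ennreal (2 / l ^ 3)"
proof -
  have "(\<integral>\<^sup>+t. ennreal (indicator {0..} t * (t\<^sup>2 * exp (- l * t))) \<partial>lborel) =
        (\<integral>\<^sup>+t. ennreal (1 / l) * ennreal (erlang_density 0 l t * t ^ 2) \<partial>lborel)"
    using l by (intro nn_integral_cong) (auto simp: erlang_density_def indicator_def ennreal_mult'[symmetric] power2_eq_square)
  also have "\<dots> = ennreal (1 / l) * (\<integral>\<^sup>+t. ennreal (erlang_density 0 l t * t ^ 2) \<partial>lborel)"
    by (rule nn_integral_cmult) (auto simp: erlang_density_def)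
  also have "\<dots> = ennreal (1 / l) * ennreal (fact 2 / (fact 0 * l ^ 2))"
    using nn_integral_erlang_ith_moment[OF l, of 0 2] by simp
  also have "\<dots> = ennreal (2 / l ^ 3)"
    using l by (simp add: ennreal_mult'[symmetric] field_simps power3_eq_cube power2_eq_square)
  finally show ?thesis .
qed



lemma B1_shift_bound:
  fixes p L t :: real assumes p: "p > 0" and L1: "L \<ge> 1"
  defines "B1 \<equiv> (\<lambda>v. indicator {L<..} v * (std_normal_density v * (p\<^sup>2 / 2 * (v / L - 1)\<^sup>2 * (v / L) powr p)))"
  shows "B1 (L + t) \<le> std_normal_density L * p\<^sup>2 / (2 * L\<^sup>2) * (indicator {0..} t * (t\<^sup>2 * exp (- (L - p) * t)))"
proof (cases "t > 0")
  case False
  then show ?thesis using L1 by (simp add: B1_def indicator_def)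
next
  case True
  have L0: "L > 0" using L1 by simp
  have phi: "std_normal_density (L + t) \<le> std_normal_density L * exp (- L * t)"
  proof -
    have "exp (- (L + t)\<^sup>2 / 2) \<le> exp (- L\<^sup>2 / 2) * exp (- L * t)"
      unfolding exp_add[symmetric] using True by (simp add: power2_eq_square field_simps)
    then show ?thesis by (simp add: std_normal_density_def divide_right_mono)
  qed
  have pw: "((L + t) / L) powr p \<le> exp (p * t)"
  proof -
    have "((L + t) / L) powr p = exp (p * ln (1 + t / L))"
    proof -
      have "t / L > 0" using L0 True by simp
      then have "1 + t / L \<noteq> 0" by linarith
      then show ?thesis using L0 True by (simp add: powr_def add_divide_distrib)
    qed
    also have "\<dots> \<le> exp (p * (t / L))"
    proof -
      have "ln (1 + t / L) \<le> t / L" using True L0 by (intro ln_add_one_self_le_self) simp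
      then have "p * ln (1 + t / L) \<le> p * (t / L)" using p by (intro mult_left_mono) auto
      then show ?thesis by simp
    qed
    also have "\<dots> \<le> exp (p * t)"
      using p True L1 by (auto intro!: mult_left_mono simp: divide_le_eq)
    finally show ?thesis .
  qed
  have e: "(L + t) / L - 1 = t / L" using L0 by (simp add: field_simps)
  have "B1 (L + t) = std_normal_density (L + t) * (p\<^sup>2 / 2 * (t / L)\<^sup>2 * ((L + t) / L) powr p)"
    using True by (simp add: B1_def e)
  also have "\<dots> \<le> (std_normal_density L * exp (- L * t)) * (p\<^sup>2 / 2 * (t / L)\<^sup>2 * exp (p * t))"
    by (intro mult_mono phi pw mult_left_mono) auto
  also have "\<dots> = std_normal_density L * p\<^sup>2 / (2 * L\<^sup>2) * (indicator {0..} t * (t\<^sup>2 * exp (- (L - p) * t)))"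
    using True L0 by (simp add: field_simps power2_eq_square exp_add[symmetric] exp_diff)
  finally show ?thesis .
qed



lemma det_bound:
  fixes p L :: real assumes p: "p > 0" and L1: "L \<ge> 1" and L2: "L \<ge> 2 * p"
  shows "integrable lborel (\<lambda>v. std_normal_density v * Tf p L v) \<and>
    \<bar>(\<integral>v. std_normal_density v * Tf p L v \<partial>lborel) - 1 / (2 * sqrt pi) * Gamma ((1 + p) / 2) * (L / sqrt 2) powr (- p)\<bar>
      \<le> 16 * p\<^sup>2 * (L / sqrt 2) powr (-5) * exp (- ((L / sqrt 2)\<^sup>2))"
proof -
  have L0: "L > 0" using L1 by simp
  have Lp: "L - p > 0" using L2 p by simp
  define m where "m = (\<lambda>v. std_normal_density v * ((\<bar>v\<bar> / L) powr p / 2))"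
  define k where "k = (\<lambda>v. m v - std_normal_density v * Tf p L v)"
  define main where "main = 1 / (2 * sqrt pi) * Gamma ((1 + p) / 2) * (L / sqrt 2) powr (- p)"
  define B1 where "B1 = (\<lambda>v. indicator {L<..} v * (std_normal_density v * (p\<^sup>2 / 2 * (v / L - 1)\<^sup>2 * (v / L) powr p)))"
  define C1 where "C1 = std_normal_density L * p\<^sup>2 / (2 * L\<^sup>2)"
  have C1: "C1 \<ge> 0" unfolding C1_def by simp
  have IA: "integrable lborel (\<lambda>v. std_normal_density v * \<bar>v\<bar> powr p)"
   and JA: "(\<integral>v. std_normal_density v * \<bar>v\<bar> powr p \<partial>lborel) = 2 powr (p / 2) * Gamma ((p + 1) / 2) / sqrt pi"
    using abs_moment[OF p] by auto
  have meq: "m = (\<lambda>v. L powr (-p) / 2 * (std_normal_density v * \<bar>v\<bar> powr p))"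
    using L0 by (auto simp: m_def powr_divide powr_minus field_simps)
  have Im: "integrable lborel m" unfolding meq using IA by simp
  have Jm: "(\<integral>v. m v \<partial>lborel) = main"
  proof -
    have s: "sqrt 2 powr p = 2 powr (p / 2)"
      by (simp add: powr_half_sqrt[symmetric] powr_powr)
    have "(L / sqrt 2) powr (- p) = L powr (- p) * 2 powr (p / 2)"
      using L0 by (simp add: powr_divide s[symmetric] powr_minus field_simps)
    moreover have "(\<integral>v. m v \<partial>lborel) = L powr (-p) / 2 * (\<integral>v. std_normal_density v * \<bar>v\<bar> powr p \<partial>lborel)"
      unfolding meq by simp
    ultimately show ?thesis unfolding main_def JA by (simp add: add.commute)
  qed
  have Tm[measurable]: "(\<lambda>v. Tf p L v) \<in> borel_measurable borel" unfolding Tf_def by measurable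
  have IT: "integrable lborel (\<lambda>v. std_normal_density v * Tf p L v)"
  proof (rule Bochner_Integration.integrable_bound[where f = std_normal_density])
    show "integrable lborel std_normal_density" by simp
    show "(\<lambda>v. std_normal_density v * Tf p L v) \<in> borel_measurable lborel" by measurable
    show "AE x in lborel. norm (std_normal_density x * Tf p L x) \<le> norm (std_normal_density x)"
    proof (intro AE_I2)
      fix x
      have "0 \<le> Tf p L x" "Tf p L x \<le> 1" using Tf_bounds[OF p L0] by auto
      then show "norm (std_normal_density x * Tf p L x) \<le> norm (std_normal_density x)"
        by (simp add: abs_mult mult_left_le)
    qed
  qed
  have Ik: "integrable lborel k" unfolding k_def using Im IT by simp
  have Jk: "(\<integral>v. std_normal_density v * Tf p L v \<partial>lborel) = main - (\<integral>v. k v \<partial>lborel)"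
    unfolding k_def using Im IT Jm by simp
  have B1_nonneg: "B1 v \<ge> 0" for v unfolding B1_def by (simp add: indicator_def)
  have kb: "0 \<le> k v \<and> k v \<le> B1 v + B1 (- v)" for v
  proof (cases "\<bar>v\<bar> \<le> L")
    case True
    then have "k v = 0" by (simp add: k_def m_def Tf_def)
    moreover have "B1 v = 0" "B1 (- v) = 0" using True by (auto simp: B1_def indicator_def)
    ultimately show ?thesis by simp
  next
    case False
    define u where "u = \<bar>v\<bar> / L"
    have u1: "u > 1" using False L0 by (simp add: u_def)
    have inv: "L / \<bar>v\<bar> = 1 / u" using False L0 by (simp add: u_def)
    have kv: "k v = std_normal_density v * ((u powr p + (1 / u) powr p) / 2 - 1)"
      using False by (simp add: k_def m_def Tf_def inv[symmetric] u_def[symmetric] field_simps)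
    have Bv: "B1 v + B1 (- v) = std_normal_density v * (p\<^sup>2 / 2 * (u - 1)\<^sup>2 * u powr p)"
    proof (cases "v > 0")
      case True
      then show ?thesis using False L0 by (simp add: B1_def u_def indicator_def)
    next
      case F2: False
      then have "\<bar>v\<bar> = - v" by simp
      moreover have "std_normal_density (- v) = std_normal_density v" by (simp add: std_normal_density_def)
      ultimately show ?thesis using False F2 L0 by (simp add: B1_def u_def indicator_def)
    qed
    have kb1: "0 \<le> (u powr p + (1 / u) powr p) / 2 - 1"
      and kb2: "(u powr p + (1 / u) powr p) / 2 - 1 \<le> p\<^sup>2 / 2 * (u - 1)\<^sup>2 * u powr p"
      using k_bound[OF p u1] by auto
    have ph: "std_normal_density v \<ge> 0" by simp
    show ?thesis unfolding kv Bv
      using mult_nonneg_nonneg[OF ph kb1] mult_left_mono[OF kb2 ph] by blast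
  qed
  have B1m[measurable]: "B1 \<in> borel_measurable borel" unfolding B1_def by measurable
  have km[measurable]: "k \<in> borel_measurable borel" unfolding k_def m_def by measurable
  have shift: "B1 (L + t) \<le> C1 * (indicator {0..} t * (t\<^sup>2 * exp (- (L - p) * t)))" for t
    using B1_shift_bound[OF p L1, of t] by (simp add: B1_def C1_def)
  have s1: "(\<integral>\<^sup>+v. ennreal (k v) \<partial>lborel) \<le> (\<integral>\<^sup>+v. ennreal (B1 v) + ennreal (B1 (- v)) \<partial>lborel)"
  proof (intro nn_integral_mono)
    fix v
    have "ennreal (k v) \<le> ennreal (B1 v + B1 (- v))" by (rule ennreal_leI) (simp add: kb)
    also have "\<dots> = ennreal (B1 v) + ennreal (B1 (- v))" by (simp add: B1_nonneg)
    finally show "ennreal (k v) \<le> ennreal (B1 v) + ennreal (B1 (- v))" .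
  qed
  have s2: "(\<integral>\<^sup>+v. ennreal (B1 v) + ennreal (B1 (- v)) \<partial>lborel) = (\<integral>\<^sup>+v. ennreal (B1 v) \<partial>lborel) + (\<integral>\<^sup>+v. ennreal (B1 (- v)) \<partial>lborel)"
    by (rule nn_integral_add) auto
  have s3: "(\<integral>\<^sup>+v. ennreal (B1 (- v)) \<partial>lborel) = (\<integral>\<^sup>+v. ennreal (B1 v) \<partial>lborel)"
    using nn_integral_real_affine[of "\<lambda>v. ennreal (B1 v)" "-1" 0] by simp
  have "(\<integral>\<^sup>+v. ennreal (B1 v) \<partial>lborel) = (\<integral>\<^sup>+t. ennreal (B1 (L + t)) \<partial>lborel)"
    using nn_integral_real_affine[of "\<lambda>v. ennreal (B1 v)" 1 L] by simp
  also have "\<dots> \<le> (\<integral>\<^sup>+t. ennreal C1 * ennreal (indicator {0..} t * (t\<^sup>2 * exp (- (L - p) * t))) \<partial>lborel)"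
  proof (intro nn_integral_mono)
    fix t
    have "ennreal (B1 (L + t)) \<le> ennreal (C1 * (indicator {0..} t * (t\<^sup>2 * exp (- (L - p) * t))))"
      by (rule ennreal_leI) (rule shift)
    also have "\<dots> = ennreal C1 * ennreal (indicator {0..} t * (t\<^sup>2 * exp (- (L - p) * t)))"
      by (rule ennreal_mult[OF C1]) (simp add: indicator_def)
    finally show "ennreal (B1 (L + t)) \<le> ennreal C1 * ennreal (indicator {0..} t * (t\<^sup>2 * exp (- (L - p) * t)))" .
  qed
  also have "\<dots> = ennreal C1 * ennreal (2 / (L - p) ^ 3)"
    using exp_moment2[OF Lp] by (subst nn_integral_cmult) simp_all
  also have "\<dots> = ennreal (2 * C1 / (L - p) ^ 3)"
    using C1 Lp by (simp add: ennreal_mult[symmetric])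
  finally have s4: "(\<integral>\<^sup>+v. ennreal (B1 v) \<partial>lborel) \<le> ennreal (2 * C1 / (L - p) ^ 3)" .
  have "(\<integral>\<^sup>+v. ennreal (k v) \<partial>lborel) \<le> ennreal (2 * C1 / (L - p) ^ 3) + ennreal (2 * C1 / (L - p) ^ 3)"
    using order_trans[OF s1[unfolded s2 s3] add_mono[OF s4 s4]] .
  also have "\<dots> = ennreal (4 * C1 / (L - p) ^ 3)"
    using C1 Lp by (simp add: ennreal_plus[symmetric] del: ennreal_plus)
  finally have nn: "(\<integral>\<^sup>+v. ennreal (k v) \<partial>lborel) \<le> ennreal (4 * C1 / (L - p) ^ 3)" .
  have Jk_eq: "(\<integral>v. k v \<partial>lborel) = enn2real (\<integral>\<^sup>+v. ennreal (k v) \<partial>lborel)"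
    by (rule integral_eq_nn_integral) (auto simp: kb)
  have Jk_le: "(\<integral>v. k v \<partial>lborel) \<le> 4 * C1 / (L - p) ^ 3"
    unfolding Jk_eq using C1 Lp by (intro enn2real_leI nn) simp
  have Jk_ge: "(\<integral>v. k v \<partial>lborel) \<ge> 0"
    by (intro integral_nonneg_AE) (auto simp: kb)
  define E where "E = exp (- L\<^sup>2 / 2)"
  have E0: "E > 0" by (simp add: E_def)
  have phiL: "std_normal_density L \<le> E"
  proof -
    have "sqrt (2 * pi) \<ge> 1" using pi_gt3 by simp
    then show ?thesis unfolding E_def std_normal_density_def
      by (simp add: divide_le_eq field_simps)
  qed
  have step1: "4 * C1 / (L - p) ^ 3 \<le> 16 * p\<^sup>2 * E / L ^ 5"
  proof -
    have c3: "(L / 2) ^ 3 \<le> (L - p) ^ 3" using L2 L0 by (intro power_mono) auto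
    have "4 * C1 / (L - p) ^ 3 \<le> 4 * C1 / (L / 2) ^ 3"
      using C1 L0 c3 Lp by (intro divide_left_mono) auto
    also have "4 * C1 / (L / 2) ^ 3 = 16 * p\<^sup>2 * std_normal_density L / L ^ 5"
      using L0 by (simp add: C1_def field_simps power2_eq_square power3_eq_cube numeral_eq_Suc)
    also have "\<dots> \<le> 16 * p\<^sup>2 * E / L ^ 5"
      using phiL L0 by (intro divide_right_mono mult_left_mono) auto
    finally show ?thesis .
  qed
  have rhs: "16 * p\<^sup>2 * (L / sqrt 2) powr (-5) * exp (- ((L / sqrt 2)\<^sup>2)) = 16 * p\<^sup>2 * E * sqrt 2 ^ 5 / L ^ 5"
  proof -
    have a: "(L / sqrt 2) powr (-5) = sqrt 2 ^ 5 / L ^ 5"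
      using L0 by (simp add: powr_minus powr_numeral power_divide)
    have b: "exp (- ((L / sqrt 2)\<^sup>2)) = E" by (simp add: E_def power_divide)
    show ?thesis unfolding a b by simp
  qed
  have step2: "16 * p\<^sup>2 * E / L ^ 5 \<le> 16 * p\<^sup>2 * E * sqrt 2 ^ 5 / L ^ 5"
  proof -
    have "1 \<le> sqrt 2 ^ 5" by (rule one_le_power) simp
    then have "16 * p\<^sup>2 * E * 1 \<le> 16 * p\<^sup>2 * E * sqrt 2 ^ 5" using E0 by (intro mult_left_mono) auto
    then show ?thesis using L0 by (intro divide_right_mono) auto
  qed
  have "\<bar>(\<integral>v. std_normal_density v * Tf p L v \<partial>lborel) - main\<bar> = (\<integral>v. k v \<partial>lborel)"
    unfolding Jk using Jk_ge by simp
  also have "\<dots> \<le> 16 * p\<^sup>2 * (L / sqrt 2) powr (-5) * exp (- ((L / sqrt 2)\<^sup>2))"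
    unfolding rhs using Jk_le step1 step2 by linarith
  finally show ?thesis using IT unfolding main_def by simp
qed



lemma indep_lemma:
  fixes M F :: "'a measure" and z h :: "'a \<Rightarrow> real"
  assumes prob: "prob_space M" and subalg: "subalgebra M F"
    and zm[measurable]: "z \<in> borel_measurable M" and hm[measurable]: "h \<in> borel_measurable M"
    and indep: "prob_space.indep_sets M
        (\<lambda>i::nat. if i = 0 then {z -` A \<inter> space M | A. A \<in> sets borel}
                  else if i = 1 then {h -` A \<inter> space M | A. A \<in> sets borel}
                  else sets F) {0, 1, 2}"
  shows "prob_space.indep_set M (sigma_sets (space M) {(\<lambda>x. x) -` A \<inter> space M |A. A \<in> sets F})
            (sigma_sets (space M) {(\<lambda>x. (z x, h x)) -` A \<inter> space M |A. A \<in> sets (borel \<Otimes>\<^sub>M borel)})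
         \<and> prob_space.indep_set M (sigma_sets (space M) {z -` A \<inter> space M |A. A \<in> sets borel})
            (sigma_sets (space M) {h -` A \<inter> space M |A. A \<in> sets borel})"
proof -
  interpret P: prob_space M by (rule prob)
  define E where "E = (\<lambda>i::nat. if i = 0 then {z -` A \<inter> space M | A. A \<in> sets borel}
                  else if i = 1 then {h -` A \<inter> space M | A. A \<in> sets borel}
                  else sets F)"
  have indE: "P.indep_sets E {0,1,2}" using indep unfolding E_def .
  have sF: "sets F \<subseteq> sets M" "space F = space M" using subalg by (auto simp: subalgebra_def)
  have pre: "Int_stable {f -` A \<inter> space M | A. A \<in> sets borel}" for f :: "'a \<Rightarrow> real"
    apply (auto simp: Int_stable_def)
    apply (rule_tac x="A \<inter> Aa" in exI)
    apply auto
    done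
  have "Int_stable (sets F)" by (auto simp: Int_stable_def)
  then have IS: "Int_stable (E i)" for i using pre[of z] pre[of h] by (auto simp: E_def)
  have col: "P.indep_set (sigma_sets (space M) (\<Union>i\<in>I True. E i)) (sigma_sets (space M) (\<Union>i\<in>I False. E i))"
    if I1: "I True \<union> I False \<subseteq> {0,1,2}" and I2: "I True \<inter> I False = {}" for I
  proof -
    have U: "(\<Union>j\<in>UNIV. I j) \<subseteq> {0,1,2}" using I1 by (auto simp: UNIV_bool)
    have D: "disjoint_family_on I UNIV"
      unfolding disjoint_family_on_def
    proof (intro ballI impI)
      fix m n :: bool assume "m \<noteq> n"
      then show "I m \<inter> I n = {}" using I2 by (cases m; cases n) auto
    qed
    have "P.indep_sets (\<lambda>j. sigma_sets (space M) (\<Union>i\<in>I j. E i)) UNIV"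
      by (rule P.indep_sets_collect_sigma[OF P.indep_sets_mono_index[OF U indE] IS D])
    moreover have "(\<lambda>j. sigma_sets (space M) (\<Union>i\<in>I j. E i)) =
        case_bool (sigma_sets (space M) (\<Union>i\<in>I True. E i)) (sigma_sets (space M) (\<Union>i\<in>I False. E i))"
      by (rule ext) (simp split: bool.split)
    ultimately show ?thesis unfolding P.indep_set_def by simp
  qed
  have mono: "P.indep_set A' B'" if "P.indep_set A B" "A' \<subseteq> A" "B' \<subseteq> B" for A B A' B'
    using that unfolding P.indep_set_def by (elim P.indep_sets_mono_sets) (auto split: bool.split)
  have idm: "(\<lambda>x. x) \<in> M \<rightarrow>\<^sub>M F"
  proof (rule measurableI)
    fix x assume "x \<in> space M" then show "x \<in> space F" using sF by simp
  next
    fix A assume "A \<in> sets F"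
    then show "(\<lambda>x. x) -` A \<inter> space M \<in> sets M" using sF sets.sets_into_space[of A F] by auto
  qed
  have part1: "P.indep_set (sigma_sets (space M) {(\<lambda>x. x) -` A \<inter> space M |A. A \<in> sets F})
            (sigma_sets (space M) {(\<lambda>x. (z x, h x)) -` A \<inter> space M |A. A \<in> sets (borel \<Otimes>\<^sub>M borel)})"
  proof -
    have c1: "P.indep_set (sigma_sets (space M) (E 2)) (sigma_sets (space M) (E 0 \<union> E 1))"
      using col[of "case_bool {2} {0,1}"] by simp
    have g1: "sigma_sets (space M) {(\<lambda>x. x) -` A \<inter> space M |A. A \<in> sets F} \<subseteq> sigma_sets (space M) (E 2)"
    proof (rule sigma_sets_subseteq)
      show "{(\<lambda>x. x) -` A \<inter> space M |A. A \<in> sets F} \<subseteq> E 2"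
        using sF sets.sets_into_space[of _ F] by (auto simp: E_def Int_absorb2)
    qed
    have Epow: "E 0 \<union> E 1 \<subseteq> Pow (space M)" by (auto simp: E_def)
    define N where "N = sigma (space M) (E 0 \<union> E 1)"
    have spN: "space N = space M" unfolding N_def by (rule space_measure_of[OF Epow])
    have sN: "sets N = sigma_sets (space M) (E 0 \<union> E 1)" unfolding N_def by (rule sets_measure_of[OF Epow])
    have zN: "z \<in> N \<rightarrow>\<^sub>M borel"
    proof (rule measurableI)
      fix A :: "real set" assume "A \<in> sets borel"
      then have "z -` A \<inter> space M \<in> E 0" by (auto simp: E_def)
      then show "z -` A \<inter> space N \<in> sets N" unfolding spN sN by (auto intro: sigma_sets.Basic)
    qed simp
    have hN: "h \<in> N \<rightarrow>\<^sub>M borel"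
    proof (rule measurableI)
      fix A :: "real set" assume "A \<in> sets borel"
      then have "h -` A \<inter> space M \<in> E 1" by (auto simp: E_def)
      then show "h -` A \<inter> space N \<in> sets N" unfolding spN sN by (auto intro: sigma_sets.Basic)
    qed simp
    have WN: "(\<lambda>x. (z x, h x)) \<in> N \<rightarrow>\<^sub>M borel \<Otimes>\<^sub>M borel" using zN hN by (rule measurable_Pair)
    have g2: "sigma_sets (space M) {(\<lambda>x. (z x, h x)) -` A \<inter> space M |A. A \<in> sets (borel \<Otimes>\<^sub>M borel)}
        \<subseteq> sigma_sets (space M) (E 0 \<union> E 1)"
    proof (rule sigma_sets_mono)
      show "{(\<lambda>x. (z x, h x)) -` A \<inter> space M |A. A \<in> sets (borel \<Otimes>\<^sub>M borel)} \<subseteq> sigma_sets (space M) (E 0 \<union> E 1)"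
        using measurable_sets[OF WN] unfolding spN sN by blast
    qed
    show ?thesis using mono[OF c1 g1 g2] .
  qed
  have part2: "P.indep_set (sigma_sets (space M) {z -` A \<inter> space M |A. A \<in> sets borel})
            (sigma_sets (space M) {h -` A \<inter> space M |A. A \<in> sets borel})"
  proof -
    have c2: "P.indep_set (sigma_sets (space M) (E 0)) (sigma_sets (space M) (E 1))"
      using col[of "case_bool {0} {1}"] by simp
    then show ?thesis by (simp add: E_def)
  qed
  show ?thesis using part1 part2 by simp
qed

lemma distr_pair_indep:
  fixes M :: "'a measure" and X :: "'a \<Rightarrow> 'b" and Y :: "'a \<Rightarrow> 'c"
  assumes prob: "prob_space M" and Xm: "X \<in> M \<rightarrow>\<^sub>M S" and Ym: "Y \<in> M \<rightarrow>\<^sub>M T"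
    and ind: "prob_space.indep_set M (sigma_sets (space M) {X -` A \<inter> space M |A. A \<in> sets S})
            (sigma_sets (space M) {Y -` A \<inter> space M |A. A \<in> sets T})"
  shows "distr M S X \<Otimes>\<^sub>M distr M T Y = distr M (S \<Otimes>\<^sub>M T) (\<lambda>x. (X x, Y x))"
proof -
  interpret P: prob_space M by (rule prob)
  have XY: "(\<lambda>x. (X x, Y x)) \<in> M \<rightarrow>\<^sub>M S \<Otimes>\<^sub>M T" using Xm Ym by (rule measurable_Pair)
  interpret PX: prob_space "distr M S X" by (rule P.prob_space_distr[OF Xm])
  interpret PY: prob_space "distr M T Y" by (rule P.prob_space_distr[OF Ym])
  show ?thesis
  proof (rule pair_measure_eqI)
    show "sigma_finite_measure (distr M S X)" by unfold_locales
    show "sigma_finite_measure (distr M T Y)" by unfold_locales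
    show "sets (distr M S X \<Otimes>\<^sub>M distr M T Y) = sets (distr M (S \<Otimes>\<^sub>M T) (\<lambda>x. (X x, Y x)))"
      by (simp cong: sets_pair_measure_cong)
  next
    fix A B assume A: "A \<in> sets (distr M S X)" and B: "B \<in> sets (distr M T Y)"
    then have A': "A \<in> sets S" and B': "B \<in> sets T" by auto
    have a: "X -` A \<inter> space M \<in> sigma_sets (space M) {X -` A \<inter> space M |A. A \<in> sets S}"
      using A' by (auto intro: sigma_sets.Basic)
    have b: "Y -` B \<inter> space M \<in> sigma_sets (space M) {Y -` A \<inter> space M |A. A \<in> sets T}"
      using B' by (auto intro: sigma_sets.Basic)
    have eq: "(\<lambda>x. (X x, Y x)) -` (A \<times> B) \<inter> space M = (X -` A \<inter> space M) \<inter> (Y -` B \<inter> space M)"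
      by auto
    have "emeasure (distr M (S \<Otimes>\<^sub>M T) (\<lambda>x. (X x, Y x))) (A \<times> B) = emeasure M ((X -` A \<inter> space M) \<inter> (Y -` B \<inter> space M))"
      using A' B' by (subst emeasure_distr[OF XY]) (auto simp: eq)
    also have "\<dots> = ennreal (P.prob (X -` A \<inter> space M) * P.prob (Y -` B \<inter> space M))"
      using P.indep_setD[OF ind a b] by (simp add: P.emeasure_eq_measure)
    also have "\<dots> = emeasure (distr M S X) A * emeasure (distr M T Y) B"
      using A' B' Xm Ym by (simp add: emeasure_distr P.emeasure_eq_measure ennreal_mult)
    finally show "emeasure (distr M S X) A * emeasure (distr M T Y) B = emeasure (distr M (S \<Otimes>\<^sub>M T) (\<lambda>x. (X x, Y x))) (A \<times> B)"
      by simp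
  qed
qed



lemma IT_lemma:
  fixes p L :: real assumes p: "p > 0" and L0: "L > 0"
  shows "integrable lborel (\<lambda>v. std_normal_density v * Tf p L v)"
proof -
  have Tm[measurable]: "(\<lambda>v. Tf p L v) \<in> borel_measurable borel" unfolding Tf_def by measurable
  show ?thesis
  proof (rule Bochner_Integration.integrable_bound[where f = std_normal_density])
    show "integrable lborel std_normal_density" by simp
    show "(\<lambda>v. std_normal_density v * Tf p L v) \<in> borel_measurable lborel" by measurable
    show "AE x in lborel. norm (std_normal_density x * Tf p L x) \<le> norm (std_normal_density x)"
    proof (intro AE_I2)
      fix x
      have "0 \<le> Tf p L x" "Tf p L x \<le> 1" using Tf_bounds[OF p L0] by auto
      then show "norm (std_normal_density x * Tf p L x) \<le> norm (std_normal_density x)"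
        by (simp add: abs_mult mult_left_le)
    qed
  qed
qed

theorem theorem2p3:
  fixes M F :: "'a measure"
    and Hbar h z :: "'a \<Rightarrow> real"
    and \<Delta> :: real
  assumes prob: "prob_space M"
    and subalg: "subalgebra M F"
    and Hbar_meas: "Hbar \<in> borel_measurable F"
    and h_distr: "distributed M lborel h (laplace_density \<Delta>)"
    and z_distr: "distributed M lborel z std_normal_density"
    and indep: "prob_space.indep_sets M
        (\<lambda>i::nat. if i = 0 then {z -` A \<inter> space M | A. A \<in> sets borel}
                  else if i = 1 then {h -` A \<inter> space M | A. A \<in> sets borel}
                  else sets F) {0, 1, 2}"
    and Delta_pos: "\<Delta> > 0"
    and Delta_def: "\<Delta> = prob_space.expectation M (\<lambda>x. \<bar>h x\<bar>)"
    and Hbar_cond: "AE x in M. Hbar x = real_cond_exp M F (\<lambda>y. Hbar y + h y) x"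
  shows "\<exists>C L0. \<forall>\<Lambda>>0. AE x in M.
           \<Lambda> / (sqrt 2 * exp (Hbar x)) \<ge> L0 \<longrightarrow>
           \<bar>real_cond_exp M F
               (indicator {y \<in> space M. \<bar>exp (Hbar y + h y) * z y\<bar> \<ge> \<Lambda>}) x
             - 1 / (2 * sqrt pi) * Gamma ((1 + 1 / \<Delta>) / 2)
                 * (\<Lambda> / (sqrt 2 * exp (Hbar x))) powr (- 1 / \<Delta>)\<bar>
           \<le> C * (\<Lambda> / (sqrt 2 * exp (Hbar x))) powr (-5)
                 * exp (- ((\<Lambda> / (sqrt 2 * exp (Hbar x)))\<^sup>2))"
proof -
  interpret P: prob_space M by (rule prob)
  define p where "p = 1 / \<Delta>"
  have p: "p > 0" using Delta_pos by (simp add: p_def)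
  have hm[measurable]: "h \<in> borel_measurable M"
    using distributed_measurable[OF h_distr] by simp
  have zm[measurable]: "z \<in> borel_measurable M"
    using distributed_measurable[OF z_distr] by simp
  have sF: "sets F \<subseteq> sets M" "space F = space M" using subalg by (auto simp: subalgebra_def)
  note Hbar_meas[measurable]
  have Hm[measurable]: "Hbar \<in> borel_measurable M" using measurable_from_subalg[OF subalg Hbar_meas] .
  have ind1: "P.indep_set (sigma_sets (space M) {(\<lambda>x. x) -` A \<inter> space M |A. A \<in> sets F})
            (sigma_sets (space M) {(\<lambda>x. (z x, h x)) -` A \<inter> space M |A. A \<in> sets (borel \<Otimes>\<^sub>M borel)})"
   and ind2: "P.indep_set (sigma_sets (space M) {z -` A \<inter> space M |A. A \<in> sets borel})
            (sigma_sets (space M) {h -` A \<inter> space M |A. A \<in> sets borel})"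
    using indep_lemma[OF prob subalg zm hm indep] by auto
  define W where "W = (\<lambda>x. (z x, h x))"
  have Wm[measurable]: "W \<in> M \<rightarrow>\<^sub>M borel \<Otimes>\<^sub>M borel" unfolding W_def by measurable
  have idm: "(\<lambda>x. x) \<in> M \<rightarrow>\<^sub>M F"
  proof (rule measurableI)
    fix x assume "x \<in> space M" then show "x \<in> space F" using sF by simp
  next
    fix A assume "A \<in> sets F"
    then show "(\<lambda>x. x) -` A \<inter> space M \<in> sets M" using sF sets.sets_into_space[of A F] by auto
  qed
  define MF where "MF = distr M F (\<lambda>x. x)"
  define PW where "PW = distr M (borel \<Otimes>\<^sub>M borel) W"
  have joint: "MF \<Otimes>\<^sub>M PW = distr M (F \<Otimes>\<^sub>M (borel \<Otimes>\<^sub>M borel)) (\<lambda>x. (x, W x))"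
    unfolding MF_def PW_def W_def by (rule distr_pair_indep[OF prob idm _ ind1]) measurable
  have PWeq: "PW = distr M borel z \<Otimes>\<^sub>M distr M borel h"
    unfolding PW_def W_def by (rule distr_pair_indep[OF prob zm hm ind2, symmetric])
  have Pz: "distr M borel z = density lborel (\<lambda>x. ennreal (std_normal_density x))"
    using distributed_distr_eq_density[OF z_distr] distr_cong[of M M borel lborel z z] by simp
  have Ph: "distr M borel h = density lborel (\<lambda>x. ennreal (laplace_density \<Delta> x))"
    using distributed_distr_eq_density[OF h_distr] distr_cong[of M M borel lborel h h] by simp
  interpret PWp: prob_space PW unfolding PW_def by (rule P.prob_space_distr) measurable
  interpret MFp: prob_space MF unfolding MF_def by (rule P.prob_space_distr[OF idm])
  interpret Php: prob_space "distr M borel h" by (rule P.prob_space_distr) measurable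
  define QS where "QS = (\<lambda>L. {w::real\<times>real. L \<le> exp (snd w) * \<bar>fst w\<bar>})"
  have QSm: "QS L \<in> sets (borel \<Otimes>\<^sub>M borel)" for L
  proof -
    have "{w \<in> space (borel \<Otimes>\<^sub>M borel). L \<le> exp (snd w) * \<bar>fst w\<bar>} \<in> sets (borel \<Otimes>\<^sub>M borel)"
      by measurable
    then show ?thesis by (simp add: QS_def space_pair_measure)
  qed
  define Q where "Q = (\<lambda>L. measure PW (QS L))"
  have lapm[measurable]: "laplace_density \<Delta> \<in> borel_measurable borel" unfolding laplace_density_def by measurable
  have Qeq: "Q L = (\<integral>v. std_normal_density v * Tf p L v \<partial>lborel)" if L: "L > 0" for L
  proof -
    have IT: "integrable lborel (\<lambda>v. std_normal_density v * Tf p L v)" by (rule IT_lemma[OF p L])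
    have "emeasure PW (QS L) = (\<integral>\<^sup>+v. emeasure (distr M borel h) (Pair v -` QS L) \<partial>(distr M borel z))"
      unfolding PWeq by (rule Php.emeasure_pair_measure_alt) (simp add: QSm cong: sets_pair_measure_cong)
    also have "\<dots> = (\<integral>\<^sup>+v. ennreal (Tf p L v) \<partial>(distr M borel z))"
    proof (rule nn_integral_cong)
      fix v
      have e: "Pair v -` QS L = {u. L \<le> exp u * \<bar>v\<bar>}" by (auto simp: QS_def)
      have Sm: "{u::real. L \<le> exp u * \<bar>v\<bar>} \<in> sets borel"
      proof -
        have "{u \<in> space borel. L \<le> exp u * \<bar>v\<bar>} \<in> sets borel" by measurable
        then show ?thesis by simp
      qed
      show "emeasure (distr M borel h) (Pair v -` QS L) = ennreal (Tf p L v)"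
        unfolding Ph e using Sm section_measure[OF Delta_pos L, of v]
        by (subst emeasure_density) (auto simp: p_def)
    qed
    also have "\<dots> = (\<integral>\<^sup>+v. ennreal (std_normal_density v) * ennreal (Tf p L v) \<partial>lborel)"
      unfolding Pz by (rule nn_integral_density) (auto simp: Tf_def)
    also have "\<dots> = (\<integral>\<^sup>+v. ennreal (std_normal_density v * Tf p L v) \<partial>lborel)"
      using Tf_bounds[OF p L] by (intro nn_integral_cong) (simp add: ennreal_mult)
    also have "\<dots> = ennreal (\<integral>v. std_normal_density v * Tf p L v \<partial>lborel)"
      using Tf_bounds[OF p L] by (intro nn_integral_eq_integral IT) simp
    finally have "emeasure PW (QS L) = ennreal (\<integral>v. std_normal_density v * Tf p L v \<partial>lborel)" .
    moreover have "(\<integral>v. std_normal_density v * Tf p L v \<partial>lborel) \<ge> 0"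
      using Tf_bounds[OF p L] by (intro integral_nonneg_AE) simp
    ultimately show ?thesis by (simp add: Q_def measure_def)
  qed
  have QSPW: "QS L \<in> sets PW" for L using QSm by (simp add: PW_def)
  have Q_anti: "Q L' \<le> Q L" if "L \<le> L'" for L L'
    unfolding Q_def using that QSPW
    by (intro PWp.finite_measure_mono) (auto simp: QS_def)
  have Q01: "0 \<le> Q L \<and> Q L \<le> 1" for L unfolding Q_def by simp
  interpret SF: sigma_finite_subalgebra M F
  proof (rule finite_measure_subalgebra_is_sigma_finite)
    show "finite_measure_subalgebra M F"
      unfolding finite_measure_subalgebra_def finite_measure_subalgebra_axioms_def
      using subalg P.finite_measure_axioms by simp
  qed
  have main: "AE x in M. real_cond_exp M F
               (indicator {y \<in> space M. \<bar>exp (Hbar y + h y) * z y\<bar> \<ge> \<Lambda>}) x = Q (\<Lambda> / exp (Hbar x))"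
    if \<Lambda>: "\<Lambda> > 0" for \<Lambda>
  proof -
    define S where "S = {y \<in> space M. \<bar>exp (Hbar y + h y) * z y\<bar> \<ge> \<Lambda>}"
    define K where "K = (\<lambda>c. Q (\<Lambda> / exp c))"
    have Kmono: "mono K"
      unfolding K_def mono_def
    proof (intro allI impI)
      fix c c' :: real assume "c \<le> c'"
      then have "\<Lambda> / exp c' \<le> \<Lambda> / exp c" using \<Lambda> by (intro divide_left_mono) auto
      then show "Q (\<Lambda> / exp c) \<le> Q (\<Lambda> / exp c')" by (rule Q_anti)
    qed
    have Km[measurable]: "K \<in> borel_measurable borel" by (rule borel_measurable_mono[OF Kmono])
    have KHm[measurable]: "(\<lambda>x. K (Hbar x)) \<in> borel_measurable F" by measurable
    have KHM[measurable]: "(\<lambda>x. K (Hbar x)) \<in> borel_measurable M" by measurable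
    have K01: "0 \<le> K c \<and> K c \<le> 1" for c using Q01 by (simp add: K_def)
    have Sm[measurable]: "S \<in> sets M" unfolding S_def by measurable
    have "AE x in M. real_cond_exp M F (indicator S) x = K (Hbar x)"
    proof (rule SF.real_cond_exp_charact)
      fix A assume A[measurable]: "A \<in> sets F"
      then have AM: "A \<in> sets M" using sF by auto
      have Asp: "A \<subseteq> space M" using sets.sets_into_space[OF AM] .
      have L1: "(\<integral>x\<in>A. indicator S x \<partial>M) = measure M (A \<inter> S)"
      proof -
        have "(\<integral>x\<in>A. indicator S x \<partial>M) = (\<integral>x. indicator (A \<inter> S) x \<partial>M)"
          unfolding set_lebesgue_integral_def by (intro Bochner_Integration.integral_cong) (auto simp: indicator_def)
        also have "\<dots> = measure M (A \<inter> S)" using Asp by (simp add: Int_absorb2 Int_assoc)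
        finally show ?thesis .
      qed
      have R1: "(\<integral>x\<in>A. K (Hbar x) \<partial>M) = enn2real (\<integral>\<^sup>+x. ennreal (indicator A x * K (Hbar x)) \<partial>M)"
        unfolding set_lebesgue_integral_def using AM
        by (simp, intro integral_eq_nn_integral) (auto simp: K01)
      define At where "At = {xw \<in> space (F \<Otimes>\<^sub>M (borel \<Otimes>\<^sub>M borel)). fst xw \<in> A \<and>
            \<Lambda> \<le> \<bar>exp (Hbar (fst xw) + snd (snd xw)) * fst (snd xw)\<bar>}"
      have Atm: "At \<in> sets (F \<Otimes>\<^sub>M (borel \<Otimes>\<^sub>M borel))" unfolding At_def by measurable
      have Rm: "(\<lambda>x. (x, W x)) \<in> M \<rightarrow>\<^sub>M F \<Otimes>\<^sub>M (borel \<Otimes>\<^sub>M borel)" using idm Wm by (rule measurable_Pair)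
      have "emeasure M (A \<inter> S) = emeasure (distr M (F \<Otimes>\<^sub>M (borel \<Otimes>\<^sub>M borel)) (\<lambda>x. (x, W x))) At"
      proof -
        have "(\<lambda>x. (x, W x)) -` At \<inter> space M = A \<inter> S"
          using Asp sF by (auto simp: At_def S_def W_def space_pair_measure)
        then show ?thesis using emeasure_distr[OF Rm Atm] by simp
      qed
      also have "\<dots> = emeasure (MF \<Otimes>\<^sub>M PW) At" unfolding joint ..
      also have "\<dots> = (\<integral>\<^sup>+x. emeasure PW (Pair x -` At) \<partial>MF)"
        by (rule PWp.emeasure_pair_measure_alt) (use Atm in \<open>simp add: MF_def PW_def cong: sets_pair_measure_cong\<close>)
      also have "\<dots> = (\<integral>\<^sup>+x. ennreal (indicator A x * K (Hbar x)) \<partial>MF)"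
      proof (rule nn_integral_cong)
        fix x assume "x \<in> space MF"
        then have xs: "x \<in> space F" by (simp add: MF_def)
        show "emeasure PW (Pair x -` At) = ennreal (indicator A x * K (Hbar x))"
        proof (cases "x \<in> A")
          case True
          have "Pair x -` At = QS (\<Lambda> / exp (Hbar x))"
            using xs True by (auto simp: At_def QS_def space_pair_measure exp_add abs_mult pos_divide_le_eq mult_ac)
          then show ?thesis using True by (simp add: K_def Q_def PWp.emeasure_eq_measure)
        next
          case False
          then have "Pair x -` At = {}" by (auto simp: At_def)
          then show ?thesis using False by simp
        qed
      qed
      also have "\<dots> = (\<integral>\<^sup>+x. ennreal (indicator A x * K (Hbar x)) \<partial>M)"
        unfolding MF_def by (rule nn_integral_distr[OF idm]) simp
      finally have key: "emeasure M (A \<inter> S) = (\<integral>\<^sup>+x. ennreal (indicator A x * K (Hbar x)) \<partial>M)" .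
      show "(\<integral>x\<in>A. indicator S x \<partial>M) = (\<integral>x\<in>A. K (Hbar x) \<partial>M)"
        unfolding L1 R1 key[symmetric] by (simp add: measure_def)
    next
      have "(indicator S :: 'a \<Rightarrow> real) \<in> borel_measurable M" by measurable
      then show "integrable M (indicator S :: 'a \<Rightarrow> real)"
        by (intro P.integrable_const_bound[of "indicator S" 1]) (auto simp: indicator_def)
      show "integrable M (\<lambda>x. K (Hbar x))"
        by (rule P.integrable_const_bound[where B=1]) (auto simp: K01 abs_le_iff)
      show "(\<lambda>x. K (Hbar x)) \<in> borel_measurable F" by (rule KHm)
    qed
    then show ?thesis by (simp add: S_def K_def)
  qed
  have e1: "- 1 / \<Delta> = - p" by (simp add: p_def)
  have e2: "1 + 1 / \<Delta> = 1 + p" by (simp add: p_def)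
  have pw: "\<bar>Q (\<Lambda> / exp c) - 1 / (2 * sqrt pi) * Gamma ((1 + p) / 2) * (\<Lambda> / (sqrt 2 * exp c)) powr (- p)\<bar>
           \<le> 16 * p\<^sup>2 * (\<Lambda> / (sqrt 2 * exp c)) powr (-5) * exp (- ((\<Lambda> / (sqrt 2 * exp c))\<^sup>2))"
    if \<Lambda>: "\<Lambda> > 0" and big: "1 + 2 * p \<le> \<Lambda> / (sqrt 2 * exp c)" for \<Lambda> c
  proof -
    define L where "L = \<Lambda> / exp c"
    have tl: "\<Lambda> / (sqrt 2 * exp c) = L / sqrt 2" by (simp add: L_def field_simps)
    have L0: "L > 0" using \<Lambda> by (simp add: L_def)
    have "L / sqrt 2 \<le> L" using L0 by (simp add: divide_le_eq)
    then have Lb: "1 + 2 * p \<le> L" using big tl by simp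
    have L1: "L \<ge> 1" and L2: "L \<ge> 2 * p" using Lb p by auto
    show ?thesis unfolding tl L_def[symmetric] Qeq[OF L0] using det_bound[OF p L1 L2] by simp
  qed
  show ?thesis
  proof (rule exI[of _ "16 * p\<^sup>2"], rule exI[of _ "1 + 2 * p"], intro allI impI)
    fix \<Lambda> :: real assume \<Lambda>: "\<Lambda> > 0"
    show "AE x in M.
           \<Lambda> / (sqrt 2 * exp (Hbar x)) \<ge> 1 + 2 * p \<longrightarrow>
           \<bar>real_cond_exp M F
               (indicator {y \<in> space M. \<bar>exp (Hbar y + h y) * z y\<bar> \<ge> \<Lambda>}) x
             - 1 / (2 * sqrt pi) * Gamma ((1 + 1 / \<Delta>) / 2)
                 * (\<Lambda> / (sqrt 2 * exp (Hbar x))) powr (- 1 / \<Delta>)\<bar>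
           \<le> 16 * p\<^sup>2 * (\<Lambda> / (sqrt 2 * exp (Hbar x))) powr (-5)
                 * exp (- ((\<Lambda> / (sqrt 2 * exp (Hbar x)))\<^sup>2))"
      using main[OF \<Lambda>]
    proof (rule AE_mp[OF _ AE_I2], intro impI)
      fix x assume ce: "real_cond_exp M F
               (indicator {y \<in> space M. \<bar>exp (Hbar y + h y) * z y\<bar> \<ge> \<Lambda>}) x = Q (\<Lambda> / exp (Hbar x))"
        and big: "\<Lambda> / (sqrt 2 * exp (Hbar x)) \<ge> 1 + 2 * p"
      show "\<bar>real_cond_exp M F
               (indicator {y \<in> space M. \<bar>exp (Hbar y + h y) * z y\<bar> \<ge> \<Lambda>}) x
             - 1 / (2 * sqrt pi) * Gamma ((1 + 1 / \<Delta>) / 2)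
                 * (\<Lambda> / (sqrt 2 * exp (Hbar x))) powr (- 1 / \<Delta>)\<bar>
           \<le> 16 * p\<^sup>2 * (\<Lambda> / (sqrt 2 * exp (Hbar x))) powr (-5)
                 * exp (- ((\<Lambda> / (sqrt 2 * exp (Hbar x)))\<^sup>2))"
        unfolding ce e1 e2 using pw[OF \<Lambda> big] .
    qed
  qed
qed


end
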